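(* Let $(M,d)$ be a pointed metric space and $f\in\mathrm{Lip}_0(M,M)$ such that $R_{\widehat f}$ has nonempty interior in $\mathcal F(M)$. Then for every nonempty finite set $N\subset M$ there is an increasing sequence $(n(j))_j\subset\mathbb N$ such that $f^{n(j)}(x)\to x$ as $j\to\infty$ for all $x\in N$. In particular $R_f=M$.
   Context: A pointed metric space is a metric space $(M,d)$ with a distinguished point $0$. $\mathrm{Lip}_0(M,M)$ denotes the Lipschitz maps $f:M\to M$ with $f(0)=0$; $\mathrm{Lip}_0(M)$ the real-valued Lipschitz functions vanishing at $0$, normed by the Lipschitz constant. $\delta:M\to\mathrm{Lip}_0(M)^*$, $\delta(x)(\varphi)=\varphi(x)$; $\mathcal F(M)$ is the norm-closed linear span of $\delta(M)$ in $\mathrm{Lip}_0(M)^*$. $\widehat f$ is the unique bounded linear operator on $\mathcal F(M)$ with $\widehat f(\delta(x))=\delta(f(x))$. For a self-map $g$ of a metric space (for an operator, with norm distance), $R_g=\{x:\liminf_{n\to\infty} d(x,g^n(x))=0\}$. *)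

theory Defs
  imports "HOL-Analysis.Analysis" "HOL-Library.Liminf_Limsup"
begin

text \<open>Elements of the dual Lip_0(M)^* are represented as functionals on real-valued
  functions; only their values on Lip_0(M) matter.\<close>

definition Lip0 :: "'a::metric_space \<Rightarrow> ('a \<Rightarrow> real) set" where
  "Lip0 z = {\<phi>. \<phi> z = 0 \<and> (\<exists>C. C-lipschitz_on UNIV \<phi>)}"

definition Lip0_ball :: "'a::metric_space \<Rightarrow> ('a \<Rightarrow> real) set" where
  "Lip0_ball z = {\<phi>. \<phi> z = 0 \<and> 1-lipschitz_on UNIV \<phi>}"

definition dnorm :: "'a::metric_space \<Rightarrow> (('a \<Rightarrow> real) \<Rightarrow> real) \<Rightarrow> real" where
  "dnorm z \<mu> = (SUP \<phi>\<in>Lip0_ball z. \<bar>\<mu> \<phi>\<bar>)"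

definition dirac :: "'a \<Rightarrow> ('a \<Rightarrow> real) \<Rightarrow> real" where
  "dirac x = (\<lambda>\<phi>. \<phi> x)"

text \<open>Lipschitz-free space F(M): functionals linear on Lip_0(M) that lie in the
  dual-norm closure of the linear span of dirac(M).\<close>
definition free_space :: "'a::metric_space \<Rightarrow> ((('a \<Rightarrow> real) \<Rightarrow> real)) set" where
  "free_space z = {\<mu>.
     (\<forall>\<phi>\<in>Lip0 z. \<forall>\<psi>\<in>Lip0 z. \<mu> (\<lambda>x. \<phi> x + \<psi> x) = \<mu> \<phi> + \<mu> \<psi>) \<and>
     (\<forall>\<phi>\<in>Lip0 z. \<forall>c. \<mu> (\<lambda>x. c * \<phi> x) = c * \<mu> \<phi>) \<and>
     (\<forall>e>0. \<exists>A a. finite A \<and>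
        (\<forall>\<phi>\<in>Lip0_ball z. \<bar>\<mu> \<phi> - (\<Sum>x\<in>A. a x * dirac x \<phi>)\<bar> \<le> e))}"

text \<open>The linearization of f: the unique bounded operator with
  fhat (dirac x) = dirac (f x); on F(M) it is given by precomposition.\<close>
definition fhat :: "('a \<Rightarrow> 'a) \<Rightarrow> (('a \<Rightarrow> real) \<Rightarrow> real) \<Rightarrow> (('a \<Rightarrow> real) \<Rightarrow> real)" where
  "fhat f \<mu> = (\<lambda>\<phi>. \<mu> (\<phi> \<circ> f))"

definition recurrent :: "('a::metric_space \<Rightarrow> 'a) \<Rightarrow> 'a set" where
  "recurrent g = {x. liminf (\<lambda>n. ereal (dist x ((g ^^ n) x))) = 0}"

definition recurrent_hat :: "'a::metric_space \<Rightarrow> ('a \<Rightarrow> 'a) \<Rightarrow> (('a \<Rightarrow> real) \<Rightarrow> real) set" where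
  "recurrent_hat z f = {\<mu>\<in>free_space z.
     liminf (\<lambda>n. ereal (dnorm z (\<lambda>\<phi>. \<mu> \<phi> - (fhat f ^^ n) \<mu> \<phi>))) = 0}"

end

theory Submission
  imports Defs
begin


lemma generic_exists:
  fixes a \<rho> :: "'a \<Rightarrow> real"
  assumes "finite S" "\<forall>l\<in>S. \<rho> l > 0"
  shows "\<exists>c::'a\<Rightarrow>real. (\<forall>l\<in>S. \<bar>c l - a l\<bar> < \<rho> l) \<and>
           (\<forall>T\<subseteq>S. \<forall>U\<subseteq>S. T \<noteq> U \<longrightarrow> sum c T \<noteq> sum c U)"
  using assms
proof (induction S rule: finite_induct)
  case empty
  show ?case by (rule exI[of _ a]) auto
next
  case (insert y S)
  then obtain c where c1: "\<forall>l\<in>S. \<bar>c l - a l\<bar> < \<rho> l"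
    and c2: "\<forall>T\<subseteq>S. \<forall>U\<subseteq>S. T \<noteq> U \<longrightarrow> sum c T \<noteq> sum c U" by auto
  define B where "B = (\<lambda>(T,U). sum c U - sum c T) ` (Pow S \<times> Pow S)"
  have fB: "finite B" using insert(1) unfolding B_def by auto
  have "\<rho> y > 0" using insert by auto
  hence "infinite ({a y - \<rho> y<..<a y + \<rho> y} - B)"
    by (intro Diff_infinite_finite fB infinite_Ioo) simp
  then obtain v where "v \<in> {a y - \<rho> y<..<a y + \<rho> y} - B"
    using infinite_imp_nonempty by blast
  hence v: "v \<in> {a y - \<rho> y<..<a y + \<rho> y}" "v \<notin> B" by auto
  define c' where "c' = c(y := v)"
  have sumT: "sum c' T = (if y \<in> T then v + sum c (T - {y}) else sum c T)" if "T \<subseteq> insert y S" for T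
  proof -
    have fT: "finite T" using that insert(1) finite_subset by blast
    have eq: "sum c' (T - {y}) = sum c (T - {y})"
      by (rule sum.cong) (auto simp: c'_def)
    show ?thesis
    proof (cases "y \<in> T")
      case True
      then show ?thesis using sum.remove[OF fT True, of c'] eq by (simp add: c'_def)
    next
      case False
      then show ?thesis using eq by simp
    qed
  qed
  have "\<forall>T\<subseteq>insert y S. \<forall>U\<subseteq>insert y S. T \<noteq> U \<longrightarrow> sum c' T \<noteq> sum c' U"
  proof (intro allI impI)
    fix T U assume TU: "T \<subseteq> insert y S" "U \<subseteq> insert y S" "T \<noteq> U"
    have T': "T - {y} \<subseteq> S" and U': "U - {y} \<subseteq> S" using TU by auto
    show "sum c' T \<noteq> sum c' U"
    proof (cases "y \<in> T"; cases "y \<in> U")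
      assume "y \<in> T" "y \<in> U"
      hence "T - {y} \<noteq> U - {y}" using TU(3) by blast
      thus ?thesis using sumT[OF TU(1)] sumT[OF TU(2)] c2 T' U' \<open>y\<in>T\<close> \<open>y\<in>U\<close> by auto
    next
      assume "y \<notin> T" "y \<notin> U"
      hence "T \<subseteq> S" "U \<subseteq> S" using TU by auto
      thus ?thesis using sumT[OF TU(1)] sumT[OF TU(2)] c2 TU(3) \<open>y\<notin>T\<close> \<open>y\<notin>U\<close> by auto
    next
      assume "y \<in> T" "y \<notin> U"
      hence "U \<subseteq> S" using TU by auto
      have "sum c U - sum c (T - {y}) \<in> B" unfolding B_def using T' \<open>U \<subseteq> S\<close> by force
      moreover have "sum c' T = sum c' U \<Longrightarrow> v = sum c U - sum c (T - {y})"
        using sumT[OF TU(1)] sumT[OF TU(2)] \<open>y\<in>T\<close> \<open>y\<notin>U\<close> by auto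
      ultimately show ?thesis using v(2) by auto
    next
      assume "y \<notin> T" "y \<in> U"
      hence "T \<subseteq> S" using TU by auto
      have "sum c T - sum c (U - {y}) \<in> B" unfolding B_def using U' \<open>T \<subseteq> S\<close> by force
      moreover have "sum c' T = sum c' U \<Longrightarrow> v = sum c T - sum c (U - {y})"
        using sumT[OF TU(1)] sumT[OF TU(2)] \<open>y\<notin>T\<close> \<open>y\<in>U\<close> by auto
      ultimately show ?thesis using v(2) by auto
    qed
  qed
  moreover have "\<forall>l\<in>insert y S. \<bar>c' l - a l\<bar> < \<rho> l"
    using c1 v(1) insert(2) by (auto simp: c'_def)
  ultimately show ?case by blast
qed

lemma lip_ball_bound: "\<phi> \<in> Lip0_ball z \<Longrightarrow> \<bar>\<phi> x\<bar> \<le> dist x z"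
  unfolding Lip0_ball_def lipschitz_on_def
  by (metis (mono_tags, lifting) UNIV_I dist_real_def diff_zero mem_Collect_eq mult_1)

lemma fhat_pow: "(fhat f ^^ n) \<mu> = (\<lambda>\<phi>. \<mu> (\<phi> \<circ> (f ^^ n)))"
  by (induction n) (auto simp: fhat_def o_assoc)

lemma zero_in_ball: "(\<lambda>_. 0) \<in> Lip0_ball z"
  unfolding Lip0_ball_def lipschitz_on_def by auto

lemma dnorm_le: "(\<forall>\<phi>\<in>Lip0_ball z. \<bar>\<mu> \<phi>\<bar> \<le> B) \<Longrightarrow> dnorm z \<mu> \<le> B"
  unfolding dnorm_def using zero_in_ball by (intro cSUP_least) auto

lemma dnorm_ge: "(\<forall>\<phi>\<in>Lip0_ball z. \<bar>\<mu> \<phi>\<bar> \<le> B) \<Longrightarrow> \<phi> \<in> Lip0_ball z \<Longrightarrow> \<bar>\<mu> \<phi>\<bar> \<le> dnorm z \<mu>"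
  unfolding dnorm_def by (rule cSUP_upper) (auto intro!: bdd_aboveI2)




lemma tent_in_ball:
  assumes "0 \<le> t" "t \<le> dist z y"
  shows "(\<lambda>x. max 0 (t - dist x y)) \<in> Lip0_ball z"
proof -
  have "dist (max 0 (t - dist a y)) (max 0 (t - dist b y)) \<le> 1 * dist a b" for a b
  proof -
    have "\<bar>dist a y - dist b y\<bar> \<le> dist a b"
      by (metis abs_le_iff dist_commute dist_triangle diff_le_eq minus_diff_eq add.commute)
    thus ?thesis unfolding dist_real_def by (simp add: abs_le_iff max_def)
  qed
  moreover have "max 0 (t - dist z y) = 0" using assms by simp
  ultimately show ?thesis unfolding Lip0_ball_def lipschitz_on_def by auto
qed

lemma key_core:
  fixes c :: "'a::metric_space \<Rightarrow> real"
  assumes fin: "finite S" and gen: "\<forall>T\<subseteq>S. \<forall>U\<subseteq>S. T \<noteq> U \<longrightarrow> sum c T \<noteq> sum c U"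
    and yS: "y \<in> S" and ep: "0 < \<epsilon>" "\<epsilon> \<le> dist z y" and sep: "\<forall>l\<in>S-{y}. \<epsilon> \<le> dist l y"
  shows "\<exists>\<eta>>0. \<forall>w. (\<forall>\<phi>\<in>Lip0_ball z. \<bar>(\<Sum>l\<in>S. c l * \<phi> l) - (\<Sum>l\<in>S. c l * \<phi> (w l))\<bar> \<le> \<eta>)
           \<longrightarrow> dist (w y) y < \<epsilon>"
proof -
  define K where "K = card S"
  define Ds where "Ds = (\<lambda>T. \<bar>c y - sum c T\<bar>) ` {T. T \<subseteq> S \<and> T \<noteq> {y}}"
  define \<delta> where "\<delta> = Min Ds"
  have fDs: "finite Ds" unfolding Ds_def using fin by auto
  have neDs: "Ds \<noteq> {}" unfolding Ds_def by auto
  have posDs: "\<forall>d\<in>Ds. d > 0"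
  proof
    fix d assume "d \<in> Ds"
    then obtain T where T: "T \<subseteq> S" "T \<noteq> {y}" "d = \<bar>c y - sum c T\<bar>" unfolding Ds_def by auto
    have "sum c {y} \<noteq> sum c T" using gen T yS by (metis empty_subsetI insert_subset)
    thus "d > 0" using T by simp
  qed
  have dpos: "\<delta> > 0" unfolding \<delta>_def using fDs neDs posDs by simp
  define \<eta> where "\<eta> = \<delta> * \<epsilon> / (4 * (real K + 1))"
  have etapos: "\<eta> > 0" unfolding \<eta>_def using dpos ep by simp
  show ?thesis
  proof (intro exI[of _ \<eta>] conjI etapos allI impI)
    fix w assume H: "\<forall>\<phi>\<in>Lip0_ball z. \<bar>(\<Sum>l\<in>S. c l * \<phi> l) - (\<Sum>l\<in>S. c l * \<phi> (w l))\<bar> \<le> \<eta>"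
    define D where "D l = dist (w l) y" for l
    define a where "a m = \<epsilon> * real m / (real K + 1)" for m :: nat
    define g where "g t = (\<Sum>l\<in>S. c l * max 0 (t - D l))" for t
    have gt: "\<bar>c y * t - g t\<bar> \<le> \<eta>" if "0 \<le> t" "t \<le> \<epsilon>" for t
    proof -
      have inb: "(\<lambda>x. max 0 (t - dist x y)) \<in> Lip0_ball z"
        using that ep by (intro tent_in_ball) auto
      have "(\<Sum>l\<in>S. c l * max 0 (t - dist l y)) = c y * max 0 (t - dist y y) + (\<Sum>l\<in>S-{y}. c l * max 0 (t - dist l y))"
        using sum.remove[OF fin yS] by blast
      also have "(\<Sum>l\<in>S-{y}. c l * max 0 (t - dist l y)) = 0"
      proof (rule sum.neutral, rule ballI)
        fix l assume "l\<in>S-{y}" hence "\<epsilon> \<le> dist l y" using sep by blast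
        thus "c l * max 0 (t - dist l y) = 0" using that by simp
      qed
      finally have "(\<Sum>l\<in>S. c l * max 0 (t - dist l y)) = c y * t" using that by simp
      moreover have "(\<Sum>l\<in>S. c l * max 0 (t - dist (w l) y)) = g t" unfolding g_def D_def ..
      ultimately show ?thesis using H inb by fastforce
    qed
    define idx where "idx l = nat \<lfloor>D l * (real K + 1) / \<epsilon>\<rfloor>" for l
    define I where "I = {m. m < K + 1 \<and> (\<exists>l\<in>S. a m < D l \<and> D l < a (Suc m))}"
    have "I \<subseteq> idx ` S"
    proof
      fix m assume "m \<in> I"
      then obtain l where l: "l \<in> S" "a m < D l" "D l < a (Suc m)" unfolding I_def by auto
      have "real m < D l * (real K + 1) / \<epsilon>" "D l * (real K + 1) / \<epsilon> < real m + 1"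
        using l ep unfolding a_def by (simp_all add: field_simps)
      hence "\<lfloor>D l * (real K + 1) / \<epsilon>\<rfloor> = int m" by (simp add: floor_eq_iff)
      hence "idx l = m" unfolding idx_def by simp
      thus "m \<in> idx ` S" using l by auto
    qed
    hence cI: "card I \<le> K"
      using card_mono[OF finite_imageI[OF fin]] card_image_le[OF fin, of idx] unfolding K_def
      by (meson le_trans)
    have finI: "finite I" by (rule finite_subset[of _ "{..<K+1}"]) (auto simp: I_def)
    have "\<not> {..<K+1} \<subseteq> I"
    proof
      assume "{..<K+1} \<subseteq> I"
      hence "card {..<K+1} \<le> card I" using card_mono[OF finI] by blast
      thus False using cI by simp
    qed
    then obtain m where m: "m < K + 1" "m \<notin> I" by auto
    hence gap: "\<forall>l\<in>S. D l \<le> a m \<or> a (Suc m) \<le> D l" unfolding I_def by auto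
    define T where "T = {l\<in>S. D l \<le> a m}"
    have step: "a (Suc m) - a m = \<epsilon> / (real K + 1)" unfolding a_def
    proof -
      have "\<epsilon> * real (Suc m) - \<epsilon> * real m = \<epsilon>" by (simp add: algebra_simps)
      thus "\<epsilon> * real (Suc m) / (real K + 1) - \<epsilon> * real m / (real K + 1) = \<epsilon> / (real K + 1)"
        by (metis diff_divide_distrib)
    qed
    have am0: "0 \<le> a m" unfolding a_def using ep by simp
    have amle: "a (Suc m) \<le> \<epsilon>" unfolding a_def using ep m by (simp add: field_simps)
    have "g (a (Suc m)) - g (a m) = (\<Sum>l\<in>S. c l * (max 0 (a (Suc m) - D l) - max 0 (a m - D l)))"
      unfolding g_def by (simp add: sum_subtractf right_diff_distrib)
    also have "\<dots> = (\<Sum>l\<in>S. if D l \<le> a m then c l * (\<epsilon> / (real K + 1)) else 0)"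
    proof (rule sum.cong[OF refl])
      fix l assume "l \<in> S"
      show "c l * (max 0 (a (Suc m) - D l) - max 0 (a m - D l)) = (if D l \<le> a m then c l * (\<epsilon> / (real K + 1)) else 0)"
      proof (cases "D l \<le> a m")
        case True
        have "\<epsilon> / (real K + 1) > 0" using ep by simp
        hence "a m \<le> a (Suc m)" using step by linarith
        then show ?thesis using True step by (simp add: max_def)
      next
        case False
        then have "a (Suc m) \<le> D l" using gap \<open>l\<in>S\<close> by auto
        then show ?thesis using False by (simp add: max_def)
      qed
    qed
    also have "\<dots> = (\<Sum>l\<in>T. c l * (\<epsilon> / (real K + 1)))"
      unfolding T_def using sum.inter_filter[OF fin, of "\<lambda>l. c l * (\<epsilon> / (real K + 1))" "\<lambda>l. D l \<le> a m"] by simp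
    also have "\<dots> = sum c T * (\<epsilon> / (real K + 1))" by (rule sum_distrib_right[symmetric])
    also have "\<dots> = (\<epsilon> / (real K + 1)) * sum c T" by (rule mult.commute)
    finally have gdiff: "g (a (Suc m)) - g (a m) = (\<epsilon> / (real K + 1)) * sum c T" .
    have stp: "\<epsilon> / (real K + 1) > 0" using ep by simp
    have "\<bar>c y * a (Suc m) - g (a (Suc m))\<bar> \<le> \<eta>" by (rule gt) (use am0 amle step stp in linarith)+
    moreover have "\<bar>c y * a m - g (a m)\<bar> \<le> \<eta>" by (rule gt) (use am0 amle step stp in linarith)+
    ultimately have "\<bar>c y * (a (Suc m) - a m) - (g (a (Suc m)) - g (a m))\<bar> \<le> 2 * \<eta>"
      by (simp add: right_diff_distrib abs_le_iff) 
    moreover have "c y * (a (Suc m) - a m) - (g (a (Suc m)) - g (a m)) = (\<epsilon> / (real K + 1)) * (c y - sum c T)"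
      unfolding step gdiff by (metis mult.commute right_diff_distrib)
    ultimately have "(\<epsilon> / (real K + 1)) * \<bar>c y - sum c T\<bar> \<le> 2 * \<eta>"
      using stp ep by (simp add: abs_mult)
    moreover have "2 * \<eta> = (\<epsilon> / (real K + 1)) * (\<delta> / 2)" unfolding \<eta>_def by (simp add: field_simps)
    ultimately have "(\<epsilon> / (real K + 1)) * \<bar>c y - sum c T\<bar> \<le> (\<epsilon> / (real K + 1)) * (\<delta> / 2)" by linarith
    hence "\<bar>c y - sum c T\<bar> \<le> \<delta> / 2" by (rule iffD1[OF mult_le_cancel_left_pos[OF stp]])
    hence lt: "\<bar>c y - sum c T\<bar> < \<delta>" using dpos by linarith
    have "T = {y}"
    proof (rule ccontr)
      assume "T \<noteq> {y}"
      hence "\<bar>c y - sum c T\<bar> \<in> Ds" unfolding Ds_def T_def by auto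
      hence "\<delta> \<le> \<bar>c y - sum c T\<bar>" unfolding \<delta>_def using fDs by simp
      thus False using lt by simp
    qed
    hence "D y \<le> a m" unfolding T_def by auto
    also have "a m < \<epsilon>"
    proof -
      have "\<epsilon> * real m < \<epsilon> * (real K + 1)" using m ep by (intro mult_strict_left_mono) auto
      moreover have "real K + 1 > 0" by simp
      ultimately show ?thesis unfolding a_def by (subst pos_divide_less_eq) auto
    qed
    finally show "dist (w y) y < \<epsilon>" unfolding D_def .
  qed
qed




lemma key:
  fixes c :: "'a::metric_space \<Rightarrow> real"
  assumes fin: "finite S" and gen: "\<forall>T\<subseteq>S. \<forall>U\<subseteq>S. T \<noteq> U \<longrightarrow> sum c T \<noteq> sum c U"
    and yS: "y \<in> S" and zS: "z \<notin> S" and ep: "0 < \<epsilon>"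
  shows "\<exists>\<eta>>0. \<forall>w. (\<forall>\<phi>\<in>Lip0_ball z. \<bar>(\<Sum>l\<in>S. c l * \<phi> l) - (\<Sum>l\<in>S. c l * \<phi> (w l))\<bar> \<le> \<eta>)
           \<longrightarrow> dist (w y) y < \<epsilon>"
proof -
  define E where "E = insert \<epsilon> (insert (dist z y) ((\<lambda>l. dist l y) ` (S - {y})))"
  define e where "e = Min E"
  have fE: "finite E" unfolding E_def using fin by auto
  have "\<forall>x\<in>E. x > 0" unfolding E_def using ep zS yS by auto
  hence epos: "e > 0" unfolding e_def using fE by (simp add: E_def)
  have le: "\<forall>x\<in>E. e \<le> x" unfolding e_def using fE by simp
  have "\<exists>\<eta>>0. \<forall>w. (\<forall>\<phi>\<in>Lip0_ball z. \<bar>(\<Sum>l\<in>S. c l * \<phi> l) - (\<Sum>l\<in>S. c l * \<phi> (w l))\<bar> \<le> \<eta>)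
           \<longrightarrow> dist (w y) y < e"
    by (rule key_core[OF fin gen yS epos]) (use le in \<open>auto simp: E_def\<close>)
  moreover have "e \<le> \<epsilon>" using le unfolding E_def by simp
  ultimately show ?thesis by (meson less_le_trans)
qed

lemma funpow_fix: "f z = z \<Longrightarrow> (f ^^ n) z = z"
  by (induction n) auto

lemma freq_from_liminf:
  assumes "liminf (\<lambda>n. ereal (D n)) = 0" "\<eta> > 0"
  shows "\<exists>n>m. D n < \<eta>"
proof (rule ccontr)
  assume neg: "\<not> ?thesis"
  have "\<forall>n\<ge>Suc m. ereal \<eta> \<le> ereal (D n)"
  proof (intro allI impI)
    fix n assume "n \<ge> Suc m" hence "n > m" by simp
    hence "\<not> D n < \<eta>" using neg by blast
    thus "ereal \<eta> \<le> ereal (D n)" by simp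
  qed
  hence "\<forall>\<^sub>F n in sequentially. ereal \<eta> \<le> ereal (D n)"
    unfolding eventually_sequentially by blast
  hence "ereal \<eta> \<le> liminf (\<lambda>n. ereal (D n))" by (rule Liminf_bounded)
  thus False using assms by simp
qed

lemma subseq_to_zero:
  fixes D :: "nat \<Rightarrow> real"
  assumes "\<forall>\<eta>>0. \<forall>m. \<exists>n>m. D n < (\<eta>::real)"
  shows "\<exists>s. strict_mono s \<and> (\<forall>j. D (s j) < 1 / (real j + 1))"
proof -
  have "\<exists>s. \<forall>j. D (s j) < 1 / (real j + 1) \<and> s j < s (Suc j)"
  proof (rule dependent_nat_choice)
    show "\<exists>x. D x < 1 / (real 0 + 1)" using assms[rule_format, of "1::real" "0::nat"] by auto
    fix x j assume "D x < 1 / (real j + 1)"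
    have "1 / (real (Suc j) + 1) > 0" by simp
    then obtain n where "n > x" "D n < 1 / (real (Suc j) + 1)" using assms by blast
    thus "\<exists>y. D y < 1 / (real (Suc j) + 1) \<and> x < y" by blast
  qed
  thus ?thesis by (auto simp: strict_mono_Suc_iff)
qed




lemma part1:
  fixes z :: "'a::metric_space" and f :: "'a \<Rightarrow> 'a"
  assumes fz: "f z = z"
    and hyp: "\<exists>\<mu>\<in>free_space z. \<exists>r>0. \<forall>\<nu>\<in>free_space z.
           dnorm z (\<lambda>\<phi>. \<nu> \<phi> - \<mu> \<phi>) < r \<longrightarrow> \<nu> \<in> recurrent_hat z f"
    and finN: "finite N"
  shows "\<exists>n::nat \<Rightarrow> nat. strict_mono n \<and> (\<forall>x\<in>N. (\<lambda>j. (f ^^ n j) x) \<longlonglongrightarrow> x)"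
proof -
  obtain \<mu> r where \<mu>: "\<mu> \<in> free_space z" and r: "r > 0"
    and ball: "\<forall>\<nu>\<in>free_space z. dnorm z (\<lambda>\<phi>. \<nu> \<phi> - \<mu> \<phi>) < r \<longrightarrow> \<nu> \<in> recurrent_hat z f"
    using hyp by blast
  have apx: "\<forall>e>0. \<exists>A a. finite A \<and>
        (\<forall>\<phi>\<in>Lip0_ball z. \<bar>\<mu> \<phi> - (\<Sum>x\<in>A. a x * dirac x \<phi>)\<bar> \<le> e)"
    using \<mu> unfolding free_space_def by blast
  have r4: "r/4 > 0" using r by simp
  obtain A a where finA: "finite A"
    and appr: "\<forall>\<phi>\<in>Lip0_ball z. \<bar>\<mu> \<phi> - (\<Sum>x\<in>A. a x * dirac x \<phi>)\<bar> \<le> r/4"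
    using apx[rule_format, OF r4] by blast
  define S where "S = (A \<union> N) - {z}"
  have finS: "finite S" unfolding S_def using finA finN by auto
  have zS: "z \<notin> S" unfolding S_def by auto
  define a' where "a' l = (if l \<in> A then a l else 0)" for l
  define \<rho> where "\<rho> l = r / (4 * (real (card S) + 1) * (dist l z + 1))" for l
  have \<rho>pos: "\<forall>l\<in>S. \<rho> l > 0"
  proof
    fix l assume "l \<in> S"
    have "0 < 4 * (real (card S) + 1) * (dist l z + 1)"
      by (intro mult_pos_pos) (auto simp: add_nonneg_pos)
    thus "\<rho> l > 0" unfolding \<rho>_def using r by simp
  qed
  obtain c where cclose: "\<forall>l\<in>S. \<bar>c l - a' l\<bar> < \<rho> l"
    and gen: "\<forall>T\<subseteq>S. \<forall>U\<subseteq>S. T \<noteq> U \<longrightarrow> sum c T \<noteq> sum c U"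
    using generic_exists[OF finS \<rho>pos] by blast
  define \<nu> where "\<nu> = (\<lambda>\<phi>::'a\<Rightarrow>real. \<Sum>l\<in>S. c l * \<phi> l)"
  have \<nu>fs: "\<nu> \<in> free_space z"
    unfolding free_space_def
  proof (intro CollectI conjI ballI allI impI)
    fix \<phi> \<psi> show "\<nu> (\<lambda>x. \<phi> x + \<psi> x) = \<nu> \<phi> + \<nu> \<psi>"
      unfolding \<nu>_def by (simp add: distrib_left sum.distrib)
  next
    fix \<phi> and k :: real show "\<nu> (\<lambda>x. k * \<phi> x) = k * \<nu> \<phi>"
      unfolding \<nu>_def by (simp add: sum_distrib_left algebra_simps)
  next
    fix e :: real assume "e > 0"
    thus "\<exists>A a. finite A \<and> (\<forall>\<phi>\<in>Lip0_ball z. \<bar>\<nu> \<phi> - (\<Sum>x\<in>A. a x * dirac x \<phi>)\<bar> \<le> e)"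
      by (intro exI[of _ S] exI[of _ c]) (auto simp: finS \<nu>_def dirac_def)
  qed
  have "dnorm z (\<lambda>\<phi>. \<nu> \<phi> - \<mu> \<phi>) \<le> r/2"
  proof (rule dnorm_le, rule ballI)
    fix \<phi> assume \<phi>: "\<phi> \<in> Lip0_ball z"
    have \<phi>z: "\<phi> z = 0" using \<phi> unfolding Lip0_ball_def by auto
    have e1: "(\<Sum>x\<in>A. a x * dirac x \<phi>) = (\<Sum>l\<in>A \<union> N. a' l * \<phi> l)"
      by (rule sum.mono_neutral_cong_left) (auto simp: finA finN a'_def dirac_def)
    have e2: "(\<Sum>l\<in>S. a' l * \<phi> l) = (\<Sum>l\<in>A \<union> N. a' l * \<phi> l)"
      by (rule sum.mono_neutral_cong_left) (auto simp: finA finN S_def \<phi>z)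
    have eqA: "(\<Sum>x\<in>A. a x * dirac x \<phi>) = (\<Sum>l\<in>S. a' l * \<phi> l)" using e1 e2 by simp
    have "\<bar>\<nu> \<phi> - (\<Sum>l\<in>S. a' l * \<phi> l)\<bar> = \<bar>\<Sum>l\<in>S. (c l - a' l) * \<phi> l\<bar>"
      unfolding \<nu>_def by (simp add: sum_subtractf left_diff_distrib)
    also have "\<dots> \<le> (\<Sum>l\<in>S. \<bar>(c l - a' l) * \<phi> l\<bar>)" by (rule sum_abs)
    also have "\<dots> \<le> (\<Sum>l\<in>S. r / (4 * (real (card S) + 1)))"
    proof (rule sum_mono)
      fix l assume l: "l \<in> S"
      have "\<bar>(c l - a' l) * \<phi> l\<bar> \<le> \<rho> l * (dist l z + 1)"
        unfolding abs_mult
        using cclose l lip_ball_bound[OF \<phi>, of l]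
        by (intro mult_mono) auto
      also have "\<dots> = r / (4 * (real (card S) + 1))"
      proof -
        have "dist l z + 1 \<noteq> 0" using zero_le_dist[of l z] by linarith
        thus ?thesis unfolding \<rho>_def by simp
      qed
      finally show "\<bar>(c l - a' l) * \<phi> l\<bar> \<le> r / (4 * (real (card S) + 1))" .
    qed
    also have "\<dots> = real (card S) * r / (4 * (real (card S) + 1))" by simp
    also have "\<dots> \<le> r / 4" using r by (simp add: field_simps)
    finally have h1: "\<bar>\<nu> \<phi> - (\<Sum>x\<in>A. a x * dirac x \<phi>)\<bar> \<le> r/4" using eqA by simp
    have h2: "\<bar>\<mu> \<phi> - (\<Sum>x\<in>A. a x * dirac x \<phi>)\<bar> \<le> r/4" using appr \<phi> by blast
    show "\<bar>\<nu> \<phi> - \<mu> \<phi>\<bar> \<le> r / 2" using h1 h2 by linarith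
  qed
  hence "dnorm z (\<lambda>\<phi>. \<nu> \<phi> - \<mu> \<phi>) < r" using r by linarith
  hence "\<nu> \<in> recurrent_hat z f" using ball \<nu>fs by blast
  hence lim: "liminf (\<lambda>n. ereal (dnorm z (\<lambda>\<phi>. \<nu> \<phi> - (fhat f ^^ n) \<nu> \<phi>))) = 0"
    unfolding recurrent_hat_def by blast
  define Dn where "Dn n = dnorm z (\<lambda>\<phi>. \<nu> \<phi> - (fhat f ^^ n) \<nu> \<phi>)" for n
  have freq: "\<forall>\<eta>>0. \<forall>m. \<exists>n>m. Dn n < (\<eta>::real)"
    using freq_from_liminf[OF lim[folded Dn_def]] by blast
  obtain s where smono: "strict_mono s" and sD: "\<forall>j. Dn (s j) < 1 / (real j + 1)"
    using subseq_to_zero[OF freq] by blast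
  have pw: "(fhat f ^^ n) \<nu> \<phi> = (\<Sum>l\<in>S. c l * \<phi> ((f ^^ n) l))" for n \<phi>
    unfolding fhat_pow \<nu>_def by simp
  have bnd: "\<bar>\<nu> \<phi> - (fhat f ^^ n) \<nu> \<phi>\<bar> \<le> Dn n" if "\<phi> \<in> Lip0_ball z" for n \<phi>
    unfolding Dn_def
  proof (rule dnorm_ge[OF _ that])
    show "\<forall>\<psi>\<in>Lip0_ball z. \<bar>\<nu> \<psi> - (fhat f ^^ n) \<nu> \<psi>\<bar> \<le> (\<Sum>l\<in>S. \<bar>c l\<bar> * (dist l z + dist ((f ^^ n) l) z))"
    proof
      fix \<psi> assume \<psi>: "\<psi> \<in> Lip0_ball z"
      have "\<bar>\<nu> \<psi> - (fhat f ^^ n) \<nu> \<psi>\<bar> = \<bar>\<Sum>l\<in>S. c l * (\<psi> l - \<psi> ((f ^^ n) l))\<bar>"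
        unfolding pw by (simp add: \<nu>_def sum_subtractf right_diff_distrib)
      also have "\<dots> \<le> (\<Sum>l\<in>S. \<bar>c l * (\<psi> l - \<psi> ((f ^^ n) l))\<bar>)" by (rule sum_abs)
      also have "\<dots> \<le> (\<Sum>l\<in>S. \<bar>c l\<bar> * (dist l z + dist ((f ^^ n) l) z))"
      proof (rule sum_mono)
        fix l
        have "\<bar>\<psi> l - \<psi> ((f ^^ n) l)\<bar> \<le> dist l z + dist ((f ^^ n) l) z"
          using lip_ball_bound[OF \<psi>, of l] lip_ball_bound[OF \<psi>, of "(f^^n) l"] by linarith
        thus "\<bar>c l * (\<psi> l - \<psi> ((f ^^ n) l))\<bar> \<le> \<bar>c l\<bar> * (dist l z + dist ((f ^^ n) l) z)"
          unfolding abs_mult by (intro mult_left_mono) auto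
      qed
      finally show "\<bar>\<nu> \<psi> - (fhat f ^^ n) \<nu> \<psi>\<bar> \<le> (\<Sum>l\<in>S. \<bar>c l\<bar> * (dist l z + dist ((f ^^ n) l) z))" .
    qed
  qed
  have conv: "(\<lambda>j. (f ^^ s j) y) \<longlonglongrightarrow> y" if yS: "y \<in> S" for y
  proof (rule tendstoI)
    fix \<epsilon> :: real assume ep: "\<epsilon> > 0"
    obtain \<eta> where \<eta>: "\<eta> > 0" and K: "\<forall>w. (\<forall>\<phi>\<in>Lip0_ball z. \<bar>(\<Sum>l\<in>S. c l * \<phi> l) - (\<Sum>l\<in>S. c l * \<phi> (w l))\<bar> \<le> \<eta>)
           \<longrightarrow> dist (w y) y < \<epsilon>"
      using key[OF finS gen yS zS ep] by blast
    obtain J :: nat where J0: "inverse (real (Suc J)) < \<eta>"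
      using reals_Archimedean[OF \<eta>] by blast
    have J: "1 / (real J + 1) < \<eta>" using J0 by (simp add: inverse_eq_divide add.commute)
    show "\<forall>\<^sub>F j in sequentially. dist ((f ^^ s j) y) y < \<epsilon>"
      unfolding eventually_sequentially
    proof (intro exI[of _ J] allI impI)
      fix j assume "J \<le> j"
      hence "1 / (real j + 1) \<le> 1 / (real J + 1)" by (simp add: frac_le)
      hence "Dn (s j) < \<eta>" using sD J by (meson le_less_trans less_trans)
      have "\<forall>\<phi>\<in>Lip0_ball z. \<bar>(\<Sum>l\<in>S. c l * \<phi> l) - (\<Sum>l\<in>S. c l * \<phi> ((f ^^ s j) l))\<bar> \<le> \<eta>"
      proof
        fix \<phi> assume "\<phi> \<in> Lip0_ball z"
        hence "\<bar>\<nu> \<phi> - (fhat f ^^ s j) \<nu> \<phi>\<bar> \<le> Dn (s j)" by (rule bnd)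
        thus "\<bar>(\<Sum>l\<in>S. c l * \<phi> l) - (\<Sum>l\<in>S. c l * \<phi> ((f ^^ s j) l))\<bar> \<le> \<eta>"
          using \<open>Dn (s j) < \<eta>\<close> unfolding pw by (simp add: \<nu>_def)
      qed
      thus "dist ((f ^^ s j) y) y < \<epsilon>" using K by blast
    qed
  qed
  have "\<forall>x\<in>N. (\<lambda>j. (f ^^ s j) x) \<longlonglongrightarrow> x"
  proof
    fix x assume "x \<in> N"
    show "(\<lambda>j. (f ^^ s j) x) \<longlonglongrightarrow> x"
    proof (cases "x = z")
      case True
      then show ?thesis using funpow_fix[of f z] fz by simp
    next
      case False
      then show ?thesis using conv \<open>x\<in>N\<close> unfolding S_def by blast
    qed
  qed
  thus ?thesis using smono by blast
qed




theorem proposition3p2: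
  fixes z :: "'a::metric_space" and f :: "'a \<Rightarrow> 'a"
  assumes "f z = z" and "\<exists>C. C-lipschitz_on UNIV f"
    and "\<exists>\<mu>\<in>free_space z. \<exists>r>0. \<forall>\<nu>\<in>free_space z.
           dnorm z (\<lambda>\<phi>. \<nu> \<phi> - \<mu> \<phi>) < r \<longrightarrow> \<nu> \<in> recurrent_hat z f"
  shows "(\<forall>N. finite N \<and> N \<noteq> {} \<longrightarrow>
           (\<exists>n::nat \<Rightarrow> nat. strict_mono n \<and>
              (\<forall>x\<in>N. (\<lambda>j. (f ^^ n j) x) \<longlonglongrightarrow> x)))
         \<and> recurrent f = UNIV"
proof
  show P1: "\<forall>N. finite N \<and> N \<noteq> {} \<longrightarrow>
           (\<exists>n::nat \<Rightarrow> nat. strict_mono n \<and> (\<forall>x\<in>N. (\<lambda>j. (f ^^ n j) x) \<longlonglongrightarrow> x))"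
    using part1[OF assms(1) assms(3)] by blast
  show "recurrent f = UNIV"
  proof (rule set_eqI)
    fix x :: 'a
    show "x \<in> recurrent f \<longleftrightarrow> x \<in> UNIV"
    proof -
    obtain s where s: "strict_mono s" "(\<lambda>j. (f ^^ s j) x) \<longlonglongrightarrow> x"
      using part1[OF assms(1) assms(3), of "{x}"] by auto
    define X where "X n = ereal (dist x ((f ^^ n) x))" for n
    have "(\<lambda>j. dist ((f ^^ s j) x) x) \<longlonglongrightarrow> 0"
      using tendsto_dist_iff[THEN iffD1, OF s(2)] .
    moreover have "(\<lambda>j. dist x ((f ^^ s j) x)) = (\<lambda>j. dist ((f ^^ s j) x) x)"
      by (rule ext, rule dist_commute)
    ultimately have "(\<lambda>j. dist x ((f ^^ s j) x)) \<longlonglongrightarrow> 0" by simp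
    hence "(X \<circ> s) \<longlonglongrightarrow> ereal 0" unfolding X_def o_def by (rule tendsto_ereal)
    hence "liminf (X \<circ> s) = 0" by (simp add: lim_imp_Liminf zero_ereal_def)
    hence le: "liminf X \<le> 0" using liminf_subseq_mono[OF s(1), of X] by simp
    have "0 \<le> liminf X" by (rule Liminf_bounded) (simp add: X_def)
    hence "liminf X = 0" using le by simp
    hence "x \<in> recurrent f" unfolding recurrent_def X_def by simp
    thus ?thesis by simp
    qed
  qed
qed


end
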